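(* Let $G=\langle a\rangle\times\langle b\rangle\cong\mathbb{Z}\times\mathbb{Z}$ and let $\mathcal{A}$ be a Schur ring over $G$ such that $\langle a^k\rangle$ is an $\mathcal{A}$-subgroup for some nonzero integer $k$. Let $D$ be the basic set of $\mathcal{A}$ containing $b$. Then one of the following holds: (i) $D=\{b\}$; (ii) $D=\{b,b^{-1}\}$; (iii) $D=\{ba^{i_0},b\}$ for some nonzero integer $i_0$; (iv) $D=\{b^{-1}a^{i_1},b\}$ for some nonzero integer $i_1$; (v) $D=\{b,\,ba^{i_2},\,b^{-1},\,b^{-1}a^{-i_2}\}$ for some nonzero integer $i_2$.
   Context: $\mathbb{F}$ is a field of characteristic $0$. A Schur ring over a group $G$ is a subspace $\mathcal{A}\subseteq\mathbb{F}[G]$ spanned by the elements $\underline{D}=\sum_{g\in D}g$, $D\in\mathcal{D}$, where $\mathcal{D}$ is a partition of $G$ into finite subsets such that $\{1\}\in\mathcal{D}$, $D\in\mathcal{D}\Rightarrow D^{-1}\in\mathcal{D}$, and each product $\underline{D_1}\,\underline{D_2}$ is a finite $\mathbb{F}$-linear combination of the $\underline{D}$, $D\in\mathcal{D}$. The elements of $\mathcal{D}$ are basic sets; an $\mathcal{A}$-subgroup is a subgroup which is a union of basic sets. *)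

theory Defs
  imports Main "HOL-Library.Product_Plus"
begin

text \<open>The group G = <a> x <b> = Z x Z is modelled as int \<times> int written additively,
  with a = (1,0) and b = (0,1); so b a^i = (i,1), b^-1 a^i = (i,-1).
  Elements of the group algebra F[G] are finitely supported functions G \<Rightarrow> F.\<close>

type_synonym grp = "int \<times> int"

definition ga_ind :: "grp set \<Rightarrow> grp \<Rightarrow> 'f::field_char_0" where
  "ga_ind D = (\<lambda>g. if g \<in> D then 1 else 0)"

definition ga_mult :: "(grp \<Rightarrow> 'f::field_char_0) \<Rightarrow> (grp \<Rightarrow> 'f) \<Rightarrow> grp \<Rightarrow> 'f" where
  "ga_mult x y = (\<lambda>g. \<Sum>h\<in>{h. x h \<noteq> 0}. x h * y (g - h))"

definition schur_partition :: "'f::field_char_0 itself \<Rightarrow> grp set set \<Rightarrow> bool" where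
  "schur_partition _ \<D> \<longleftrightarrow>
     (\<forall>D\<in>\<D>. D \<noteq> {} \<and> finite D) \<and>
     (\<forall>D1\<in>\<D>. \<forall>D2\<in>\<D>. D1 \<noteq> D2 \<longrightarrow> D1 \<inter> D2 = {}) \<and>
     \<Union>\<D> = UNIV \<and>
     {0} \<in> \<D> \<and>
     (\<forall>D\<in>\<D>. uminus ` D \<in> \<D>) \<and>
     (\<forall>D1\<in>\<D>. \<forall>D2\<in>\<D>. \<exists>S c. finite S \<and> S \<subseteq> \<D> \<and>
        ga_mult (ga_ind D1 :: grp \<Rightarrow> 'f) (ga_ind D2) = (\<lambda>g. \<Sum>E\<in>S. c E * ga_ind E g))"

definition A_subgroup :: "grp set set \<Rightarrow> grp set \<Rightarrow> bool" where
  "A_subgroup \<D> H \<longleftrightarrow> 0 \<in> H \<and> (\<forall>x\<in>H. \<forall>y\<in>H. x - y \<in> H) \<and>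
     H = \<Union>{E\<in>\<D>. E \<subseteq> H}"

end

theory Submission
  imports Defs "HOL-Number_Theory.Cong"
begin

definition cnt :: "grp set \<Rightarrow> grp set \<Rightarrow> grp \<Rightarrow> nat" where
  "cnt E F g = card {h\<in>E. g - h \<in> F}"

locale SR =
  fixes \<D> :: "grp set set"
  assumes fin: "\<And>D. D\<in>\<D> \<Longrightarrow> D \<noteq> {} \<and> finite D"
    and disj: "\<And>D1 D2. D1\<in>\<D> \<Longrightarrow> D2\<in>\<D> \<Longrightarrow> D1 \<noteq> D2 \<Longrightarrow> D1 \<inter> D2 = {}"
    and cover: "\<Union>\<D> = UNIV"
    and zero: "{0} \<in> \<D>"
    and neg: "\<And>D. D\<in>\<D> \<Longrightarrow> uminus ` D \<in> \<D>"
    and cntc: "\<And>D1 D2 E g g'. D1\<in>\<D> \<Longrightarrow> D2\<in>\<D> \<Longrightarrow> E\<in>\<D> \<Longrightarrow> g\<in>E \<Longrightarrow> g'\<in>E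
              \<Longrightarrow> cnt D1 D2 g = cnt D1 D2 g'"

lemma sum_ind_card:
  assumes "finite A"
  shows "(\<Sum>h\<in>A. ga_ind B (g - h) :: 'f::field_char_0) = of_nat (cnt A B g)"
proof -
  have "(\<Sum>h\<in>A. ga_ind B (g - h) :: 'f) = (\<Sum>h\<in>A. if g - h \<in> B then 1 else 0)"
    by (simp add: ga_ind_def)
  also have "\<dots> = (\<Sum>h\<in>{h\<in>A. g - h \<in> B}. 1)"
    using sum.inter_filter[OF assms, of "\<lambda>_. (1::'f)" "\<lambda>h. g - h \<in> B"] by simp
  also have "\<dots> = of_nat (cnt A B g)" by (simp add: cnt_def)
  finally show ?thesis .
qed

lemma schur_SR:
  assumes sp: "schur_partition TYPE('f::field_char_0) \<D>"
  shows "SR \<D>"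
proof -
  note s = sp[unfolded schur_partition_def]
  have fin: "\<And>D. D\<in>\<D> \<Longrightarrow> D \<noteq> {} \<and> finite D" using s by simp
  have disj: "\<And>D1 D2. D1\<in>\<D> \<Longrightarrow> D2\<in>\<D> \<Longrightarrow> D1 \<noteq> D2 \<Longrightarrow> D1 \<inter> D2 = {}" using s by simp
  show ?thesis
  proof
    fix D1 D2 E g g'
    assume D1: "D1\<in>\<D>" and D2: "D2\<in>\<D>" and E: "E\<in>\<D>" and g: "g\<in>E" and g': "g'\<in>E"
    obtain S c where S: "finite S" "S \<subseteq> \<D>"
      and eq: "ga_mult (ga_ind D1 :: grp \<Rightarrow> 'f) (ga_ind D2) = (\<lambda>g. \<Sum>E\<in>S. c E * ga_ind E g)"
      using s D1 D2 by blast
    have supp: "{h. (ga_ind D1 h :: 'f) \<noteq> 0} = D1" by (auto simp: ga_ind_def)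
    have L: "ga_mult (ga_ind D1 :: grp \<Rightarrow> 'f) (ga_ind D2) x = of_nat (cnt D1 D2 x)" for x
      unfolding ga_mult_def supp
      using sum_ind_card[of D1 D2 x] fin[OF D1]
      by (simp add: ga_ind_def)
    have R: "(\<Sum>E'\<in>S. c E' * (ga_ind E' x :: 'f)) = (if E \<in> S then c E else 0)" if x: "x \<in> E" for x
    proof -
      have "(\<Sum>E'\<in>S. c E' * (ga_ind E' x :: 'f)) = (\<Sum>E'\<in>S. if E' = E then c E' else 0)"
      proof (rule sum.cong)
        fix E' assume "E' \<in> S"
        hence "E' \<in> \<D>" using S by auto
        hence "x \<in> E' \<longleftrightarrow> E' = E" using disj[of E' E] E x by auto
        thus "c E' * ga_ind E' x = (if E' = E then c E' else 0)" by (auto simp: ga_ind_def)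
      qed simp
      also have "\<dots> = (if E \<in> S then c E else 0)" using S(1) by (simp add: sum.delta')
      finally show ?thesis .
    qed
    have "(of_nat (cnt D1 D2 g) :: 'f) = of_nat (cnt D1 D2 g')"
      using L[of g] L[of g'] R[OF g] R[OF g'] eq by (metis (no_types, lifting))
    thus "cnt D1 D2 g = cnt D1 D2 g'" by simp
  qed (use s in simp)+
qed

lemma neg_eq_helper: "(e - f = - h) = (f = e + (h::'a::ab_group_add))"
  by (metis add_diff_cancel_left' diff_add_cancel diff_minus_eq_add minus_diff_eq)

lemma sum_list_rotate1: "sum_list (rotate1 xs) = sum_list (xs :: 'a::comm_monoid_add list)"
  by (cases xs) (simp_all add: add.commute)

lemma sum_list_rotate: "sum_list (rotate n xs) = sum_list (xs :: 'a::comm_monoid_add list)"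
  by (induct n) (simp_all add: sum_list_rotate1)

lemma rotate_mult_fix: "rotate d xs = xs \<Longrightarrow> rotate (d*c) xs = xs"
proof (induct c)
  case (Suc c)
  have "rotate (d * Suc c) xs = rotate d (rotate (d*c) xs)" by (simp add: rotate_rotate)
  thus ?case using Suc by simp
qed simp

lemma rotate_period:
  assumes p: "prime p" and len: "length xs = p" and r: "rotate d xs = xs" and d: "0 < d" "d < p"
  shows "rotate1 xs = xs"
proof -
  have "\<not> p dvd d" using d nat_dvd_not_less by blast
  hence "coprime p d" using p prime_imp_coprime by blast
  hence "coprime d p" by (simp add: coprime_commute)
  then obtain c where c: "[d * c = Suc 0] (mod p)" using cong_solve_coprime_nat by blast
  have p2: "p \<ge> 2" using p prime_ge_2_nat by blast
  have "rotate (d*c) xs = xs" using rotate_mult_fix[OF r] .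
  moreover have "rotate (d*c) xs = rotate ((d*c) mod p) xs" using rotate_conv_mod len by metis
  moreover have "(d*c) mod p = 1" using c p2 unfolding cong_def by simp
  ultimately show ?thesis by simp
qed

lemma rotate_back: "length xs = p \<Longrightarrow> i \<le> p \<Longrightarrow> rotate (p - i) (rotate i xs) = xs"
  by (simp add: rotate_rotate)

lemma rotate1_fix_rotate: "rotate1 zs = zs \<Longrightarrow> rotate1 (rotate n zs) = rotate n zs"
  by (simp add: rotate1_rotate_swap)

lemma orbit_inj:
  assumes p: "prime p" and len: "length xs = p" and nf: "rotate1 xs \<noteq> xs"
  shows "inj_on (\<lambda>i. rotate i xs) {..<p}"
proof (rule inj_onI, rule ccontr)
  have key: False if ij: "i < j" "j < p" and eq: "rotate i xs = rotate j xs" for i j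
  proof -
    let ?ys = "rotate j xs"
    have "rotate (j - i) (rotate i xs) = ?ys" using ij by (simp add: rotate_rotate)
    hence "rotate (j - i) ?ys = ?ys" using eq by simp
    hence f: "rotate1 ?ys = ?ys" using rotate_period[OF p _ _, of ?ys "j - i"] len ij by simp
    have "xs = rotate (p - j) ?ys" using rotate_back[OF len, of j] ij by simp
    hence "rotate1 xs = xs" using rotate1_fix_rotate[OF f, of "p - j"] by simp
    thus False using nf by simp
  qed
  fix i j assume "i \<in> {..<p}" "j \<in> {..<p}" "rotate i xs = rotate j xs" "i \<noteq> j"
  thus False using key[of i j] key[of j i] by (cases "i < j") auto
qed

lemma card_mod_fix:
  assumes p: "prime p"
  shows "finite S \<Longrightarrow> (\<forall>xs\<in>S. length xs = p) \<Longrightarrow> (\<forall>xs\<in>S. rotate1 xs \<in> S) \<Longrightarrow>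
    card S mod p = card {xs\<in>S. rotate1 xs = xs} mod p"
proof (induction "card S" arbitrary: S rule: less_induct)
  case less
  show ?case
  proof (cases "\<forall>xs\<in>S. rotate1 xs = xs")
    case True
    hence "{xs\<in>S. rotate1 xs = xs} = S" by auto
    thus ?thesis by simp
  next
    case False
    then obtain xs where xs: "xs \<in> S" "rotate1 xs \<noteq> xs" by blast
    have len: "length xs = p" using less xs by blast
    have p0: "p > 0" using p prime_gt_0_nat by blast
    let ?O = "(\<lambda>i. rotate i xs) ` {..<p}"
    have rotS: "rotate n ys \<in> S" if "ys \<in> S" for n ys
      using that by (induct n) (use less in auto)
    have OS: "?O \<subseteq> S" using rotS xs by auto
    have cO: "card ?O = p" using card_image[OF orbit_inj[OF p len xs(2)]] by simp
    have inO: "rotate n xs \<in> ?O" for n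
    proof -
      have "rotate n xs = rotate (n mod p) xs" using rotate_conv_mod len by metis
      moreover have "n mod p < p" using p0 by simp
      ultimately show ?thesis by blast
    qed
    let ?S' = "S - ?O"
    have fin': "finite ?S'" using less by simp
    have len': "\<forall>ys\<in>?S'. length ys = p" using less by blast
    have cl': "\<forall>ys\<in>?S'. rotate1 ys \<in> ?S'"
    proof
      fix ys assume ys: "ys \<in> ?S'"
      have "rotate1 ys \<in> S" using less ys by blast
      moreover have "rotate1 ys \<notin> ?O"
      proof
        assume "rotate1 ys \<in> ?O"
        then obtain i where "rotate1 ys = rotate i xs" by blast
        moreover have "length ys = p" using less ys by blast
        hence "rotate (p - 1) (rotate1 ys) = ys"
          using rotate_back[of ys p 1] p0 by simp
        ultimately have "ys = rotate (p - 1 + i) xs" by (simp add: rotate_rotate)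
        thus False using ys inO by blast
      qed
      ultimately show "rotate1 ys \<in> ?S'" by blast
    qed
    have fixeq: "{ys\<in>?S'. rotate1 ys = ys} = {ys\<in>S. rotate1 ys = ys}"
    proof -
      have "rotate1 zs \<noteq> zs" if "zs \<in> ?O" for zs
      proof
        assume f: "rotate1 zs = zs"
        from that obtain i where i: "i < p" "zs = rotate i xs" by blast
        have "xs = rotate (p - i) zs" using rotate_back[OF len, of i] i by simp
        hence "rotate1 xs = xs" using rotate1_fix_rotate[OF f, of "p - i"] by simp
        thus False using xs by simp
      qed
      thus ?thesis by blast
    qed
    have cS: "card S = card ?S' + p"
      using card_Diff_subset[OF finite_subset[OF OS less(2)] OS] card_mono[OF less(2) OS] cO by simp
    have "card ?S' < card S" using cS p0 by simp
    hence "card ?S' mod p = card {ys\<in>?S'. rotate1 ys = ys} mod p"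
      using less(1)[OF _ fin' len' cl'] by blast
    thus ?thesis using cS fixeq by simp
  qed
qed

definition smul :: "int \<Rightarrow> grp \<Rightarrow> grp" where
  "smul n g = (n * fst g, n * snd g)"

lemma sum_list_replicate_smul: "sum_list (replicate n g) = smul (int n) g"
  by (induct n) (auto simp: smul_def algebra_simps prod_eq_iff)

lemma smul_inj: "n \<noteq> 0 \<Longrightarrow> smul n g = smul n g' \<Longrightarrow> g = g'"
  by (auto simp: smul_def prod_eq_iff)

lemma smul_mult: "smul (a * b) g = smul a (smul b g)"
  by (simp add: smul_def)

lemma smul_one: "smul 1 g = g" by (simp add: smul_def)

definition tup :: "grp set \<Rightarrow> nat \<Rightarrow> grp \<Rightarrow> grp list set" where
  "tup E n x = {xs. length xs = n \<and> set xs \<subseteq> E \<and> sum_list xs = x}"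

lemma tup_finite: "finite E \<Longrightarrow> finite (tup E n x)"
  by (rule finite_subset[OF _ finite_lists_length_eq[of E n]]) (auto simp: tup_def)

lemma tup_Suc: "tup E (Suc n) x = (\<Union>e\<in>E. (#) e ` tup E n (x - e))"
proof (rule set_eqI)
  fix xs
  show "xs \<in> tup E (Suc n) x \<longleftrightarrow> xs \<in> (\<Union>e\<in>E. (#) e ` tup E n (x - e))"
  proof
    assume "xs \<in> tup E (Suc n) x"
    then obtain e ys where "xs = e # ys" "length ys = n" "e \<in> E" "set ys \<subseteq> E" "e + sum_list ys = x"
      unfolding tup_def by (cases xs) auto
    moreover hence "sum_list ys = x - e" by (metis add_diff_cancel_left')
    ultimately show "xs \<in> (\<Union>e\<in>E. (#) e ` tup E n (x - e))" unfolding tup_def by blast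
  next
    assume "xs \<in> (\<Union>e\<in>E. (#) e ` tup E n (x - e))"
    then obtain e ys where "xs = e # ys" "length ys = n" "e \<in> E" "set ys \<subseteq> E" "sum_list ys = x - e"
      unfolding tup_def by blast
    thus "xs \<in> tup E (Suc n) x" unfolding tup_def by auto
  qed
qed

lemma card_tup_Suc:
  assumes "finite E"
  shows "card (tup E (Suc n) x) = (\<Sum>e\<in>E. card (tup E n (x - e)))"
proof -
  have "card (tup E (Suc n) x) = (\<Sum>e\<in>E. card ((#) e ` tup E n (x - e)))"
    unfolding tup_Suc
    by (rule card_UN_disjoint) (use assms tup_finite[OF assms] in auto)
  also have "\<dots> = (\<Sum>e\<in>E. card (tup E n (x - e)))"
    by (rule sum.cong) (auto intro: card_image simp: inj_on_def)
  finally show ?thesis .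
qed

lemma tup_zero: "card (tup E 0 x) = (if x = 0 then 1 else 0)"
proof -
  have "tup E 0 x = (if x = 0 then {[]} else {})" by (auto simp: tup_def)
  thus ?thesis by simp
qed

lemma tup_rot: "xs \<in> tup E n x \<Longrightarrow> rotate1 xs \<in> tup E n x"
  by (simp add: tup_def sum_list_rotate1)

lemma tup_fix:
  assumes p: "p > 0"
  shows "{xs\<in>tup E p x. rotate1 xs = xs} = (\<lambda>e. replicate p e) ` {e\<in>E. smul (int p) e = x}"
proof (rule set_eqI, rule iffI)
  fix xs assume "xs \<in> {xs\<in>tup E p x. rotate1 xs = xs}"
  hence xs: "length xs = p" "set xs \<subseteq> E" "sum_list xs = x" "rotate1 xs = xs" by (auto simp: tup_def)
  hence "xs \<noteq> []" using p by auto
  hence "card (set xs) = 1" using rotate1_fixpoint_card[OF xs(4)] by simp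
  then obtain e where e: "set xs = {e}" using card_1_singletonE by blast
  hence "xs = replicate p e" using xs(1) by (intro replicate_eqI) auto
  thus "xs \<in> (\<lambda>e. replicate p e) ` {e\<in>E. smul (int p) e = x}"
    using xs e by (auto simp: sum_list_replicate_smul)
next
  fix xs assume "xs \<in> (\<lambda>e. replicate p e) ` {e\<in>E. smul (int p) e = x}"
  thus "xs \<in> {xs\<in>tup E p x. rotate1 xs = xs}"
    using p by (auto simp: tup_def sum_list_replicate_smul)
qed

context SR begin

lemma ex1_blk: "\<exists>!E. E \<in> \<D> \<and> g \<in> E"
proof -
  obtain E where "E \<in> \<D>" "g \<in> E" using cover by blast
  thus ?thesis using disj by blast
qed

definition blk :: "grp \<Rightarrow> grp set" where
  "blk g = (THE E. E \<in> \<D> \<and> g \<in> E)"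

lemma blk: "blk g \<in> \<D>" "g \<in> blk g"
  using theI'[OF ex1_blk[of g]] unfolding blk_def by auto

lemma blk_eq: "E \<in> \<D> \<Longrightarrow> g \<in> E \<Longrightarrow> blk g = E"
  using ex1_blk[of g] blk[of g] by blast

definition sb :: "grp \<Rightarrow> grp \<Rightarrow> bool" where
  "sb g g' \<longleftrightarrow> g' \<in> blk g"

lemma sb_iff: "sb g g' \<longleftrightarrow> (\<exists>E\<in>\<D>. g \<in> E \<and> g' \<in> E)"
  unfolding sb_def using blk blk_eq by metis

lemma sb_sym: "sb g g' \<Longrightarrow> sb g' g" by (meson sb_iff)
lemma sb_refl: "sb g g" by (simp add: sb_def blk)

lemma cnt_sb: "D1\<in>\<D> \<Longrightarrow> D2\<in>\<D> \<Longrightarrow> sb g g' \<Longrightarrow> cnt D1 D2 g = cnt D1 D2 g'"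
proof -
  assume a: "D1\<in>\<D>" "D2\<in>\<D>" "sb g g'"
  then obtain E where "E\<in>\<D>" "g \<in> E" "g' \<in> E" using sb_iff by auto
  thus ?thesis using cntc[OF a(1,2)] by blast
qed

definition Aset :: "grp set \<Rightarrow> bool" where
  "Aset X \<longleftrightarrow> (\<forall>g g'. sb g g' \<longrightarrow> g \<in> X \<longrightarrow> g' \<in> X)"

lemma Aset_blk: "Aset X \<Longrightarrow> g \<in> X \<Longrightarrow> blk g \<subseteq> X"
  unfolding Aset_def sb_def by blast

lemma Aset_sum:
  assumes X: "Aset X" and Y: "Aset Y"
  shows "Aset {x + y | x y. x \<in> X \<and> y \<in> Y}"
  unfolding Aset_def
proof (intro allI impI)
  fix g g' assume sg: "sb g g'" and "g \<in> {x + y | x y. x \<in> X \<and> y \<in> Y}"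
  then obtain x y where xy: "x \<in> X" "y \<in> Y" "g = x + y" by blast
  let ?E = "blk x" and ?F = "blk y"
  have xin: "x \<in> {h\<in>?E. g - h \<in> ?F}" using xy blk by simp
  have "finite ?E" using fin blk by blast
  hence "finite {h\<in>?E. g - h \<in> ?F}" by simp
  hence "cnt ?E ?F g > 0" unfolding cnt_def using xin card_gt_0_iff by blast
  hence "cnt ?E ?F g' > 0" using cnt_sb[OF blk(1) blk(1) sg] by simp
  hence "{h\<in>?E. g' - h \<in> ?F} \<noteq> {}" unfolding cnt_def by (intro notI) simp
  then obtain h where h: "h \<in> ?E" "g' - h \<in> ?F" by blast
  have "h \<in> X" using Aset_blk[OF X xy(1)] h by blast
  moreover have "g' - h \<in> Y" using Aset_blk[OF Y xy(2)] h by blast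
  moreover have "g' = h + (g' - h)" by simp
  ultimately show "g' \<in> {x + y | x y. x \<in> X \<and> y \<in> Y}" by blast
qed

lemma blk_zero: "blk 0 = {0}" using blk_eq zero by simp

lemma sb_zero: "sb 0 g \<Longrightarrow> g = 0" using blk_zero sb_def by auto

lemma translate:
  assumes h: "{h} \<in> \<D>" and s: "sb e1 e2"
  shows "sb (e1 + h) (e2 + h)"
proof -
  let ?F = "blk (e1 + h)"
  have nh: "{-h} \<in> \<D>" using neg[OF h] by simp
  have "\<And>e. {f\<in>?F. e - f \<in> {-h}} = {e + h} \<inter> ?F" using neg_eq_helper by auto
  hence "\<And>e. cnt ?F {-h} e = card ({e + h} \<inter> ?F)" by (simp add: cnt_def)
  hence "card ({e1 + h} \<inter> ?F) = card ({e2 + h} \<inter> ?F)"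
    using cnt_sb[OF blk(1)[of "e1+h"] nh s] by simp
  moreover have "{e1 + h} \<inter> ?F = {e1 + h}" using blk by auto
  ultimately have "card ({e2 + h} \<inter> ?F) = 1" by simp
  hence "e2 + h \<in> ?F" by (cases "e2 + h \<in> ?F") auto
  thus ?thesis by (simp add: sb_def)
qed

definition bc :: "(grp \<Rightarrow> nat) \<Rightarrow> bool" where
  "bc f \<longleftrightarrow> (\<forall>g g'. sb g g' \<longrightarrow> f g = f g')"

lemma conv_bc:
  assumes E: "E \<in> \<D>" and f: "bc f" and fs: "finite {y. f y \<noteq> 0}"
  shows "bc (\<lambda>x. \<Sum>e\<in>E. f (x - e))"
proof -
  define S where "S = blk ` {y. f y \<noteq> 0}"
  define c where "c F = f (SOME y. y \<in> F)" for F
  have Sfin: "finite S" using fs by (simp add: S_def)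
  have SD: "S \<subseteq> \<D>" using blk by (auto simp: S_def)
  have key: "f y = (\<Sum>F\<in>S. if y \<in> F then c F else 0)" for y
  proof (cases "f y = 0")
    case False
    hence bS: "blk y \<in> S" by (auto simp: S_def)
    have "(\<Sum>F\<in>S. if y \<in> F then c F else 0) = (\<Sum>F\<in>S. if F = blk y then c F else 0)"
    proof (rule sum.cong)
      fix F assume "F \<in> S"
      hence FD: "F \<in> \<D>" using SD by blast
      have "y \<in> F \<longleftrightarrow> F = blk y" using blk_eq[OF FD, of y] blk(2)[of y] by auto
      thus "(if y \<in> F then c F else 0) = (if F = blk y then c F else 0)" by simp
    qed simp
    also have "\<dots> = c (blk y)" using bS Sfin by (simp add: sum.delta')
    also have "\<dots> = f y"
    proof -
      have "(SOME z. z \<in> blk y) \<in> blk y" using blk by (meson someI)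
      hence "sb y (SOME z. z \<in> blk y)" by (simp add: sb_def)
      hence "f y = f (SOME z. z \<in> blk y)" using f unfolding bc_def by blast
      thus ?thesis by (simp add: c_def)
    qed
    finally show ?thesis by simp
  next
    case True
    have "(if y \<in> F then c F else 0) = 0" if F: "F \<in> S" for F
    proof (cases "y \<in> F")
      case True
      from F obtain z where z: "f z \<noteq> 0" "F = blk z" by (auto simp: S_def)
      hence "sb z y" using True by (simp add: sb_def)
      hence "f y = f z" using f unfolding bc_def by (metis)
      thus ?thesis using z \<open>f y = 0\<close> by simp
    qed simp
    thus ?thesis using True by simp
  qed
  have expand: "(\<Sum>e\<in>E. f (x - e)) = (\<Sum>F\<in>S. c F * cnt E F x)" for x
  proof -
    have finE: "finite E" using fin E by blast
    have "(\<Sum>e\<in>E. f (x - e)) = (\<Sum>e\<in>E. \<Sum>F\<in>S. if x - e \<in> F then c F else 0)"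
      using key by simp
    also have "\<dots> = (\<Sum>F\<in>S. \<Sum>e\<in>E. if x - e \<in> F then c F else 0)" by (rule sum.swap)
    also have "\<dots> = (\<Sum>F\<in>S. c F * cnt E F x)"
    proof (rule sum.cong)
      fix F
      have "(\<Sum>e\<in>E. if x - e \<in> F then c F else 0) = (\<Sum>e\<in>{e\<in>E. x - e \<in> F}. c F)"
        using sum.inter_filter[OF finE, of "\<lambda>_. c F" "\<lambda>e. x - e \<in> F"] by simp
      thus "(\<Sum>e\<in>E. if x - e \<in> F then c F else 0) = c F * cnt E F x"
        by (simp add: cnt_def mult.commute)
    qed simp
    finally show ?thesis .
  qed
  show ?thesis unfolding bc_def
  proof (intro allI impI)
    fix g g' assume "sb g g'"
    hence "\<And>F. F \<in> S \<Longrightarrow> cnt E F g = cnt E F g'" using cnt_sb[OF E] SD by blast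
    thus "(\<Sum>e\<in>E. f (g - e)) = (\<Sum>e\<in>E. f (g' - e))" unfolding expand by (simp cong: sum.cong)
  qed
qed

lemma tup_bc:
  assumes E: "E \<in> \<D>"
  shows "bc (\<lambda>x. card (tup E n x)) \<and> finite {x. card (tup E n x) \<noteq> 0}"
proof (induct n)
  case 0
  have "bc (\<lambda>x. card (tup E 0 x))" unfolding bc_def tup_zero
    using sb_zero sb_sym by fastforce
  moreover have "{x. card (tup E 0 x) \<noteq> 0} \<subseteq> {0}" unfolding tup_zero by auto
  ultimately show ?case using finite_subset by blast
next
  case (Suc n)
  have finE: "finite E" using fin E by blast
  have "bc (\<lambda>x. card (tup E (Suc n) x))"
    unfolding card_tup_Suc[OF finE] using conv_bc[OF E] Suc by blast
  moreover have "{x. card (tup E (Suc n) x) \<noteq> 0} \<subseteq> sum_list ` {xs. set xs \<subseteq> E \<and> length xs = Suc n}"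
  proof
    fix x assume "x \<in> {x. card (tup E (Suc n) x) \<noteq> 0}"
    hence "tup E (Suc n) x \<noteq> {}" by auto
    then obtain xs where "xs \<in> tup E (Suc n) x" by blast
    thus "x \<in> sum_list ` {xs. set xs \<subseteq> E \<and> length xs = Suc n}" by (auto simp: tup_def)
  qed
  moreover have "finite (sum_list ` {xs. set xs \<subseteq> E \<and> length xs = Suc n})"
    using finite_lists_length_eq[OF finE] by blast
  ultimately show ?case using finite_subset by blast
qed

lemma multiplier:
  assumes p: "prime p" and E: "E \<in> \<D>" and s: "sb g g'" and g: "g \<in> smul (int p) ` E"
  shows "g' \<in> smul (int p) ` E"
proof -
  have p0: "p > 0" and p2: "p \<ge> 2" using p prime_gt_0_nat prime_ge_2_nat by auto
  have finE: "finite E" using fin E by blast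
  have cm: "card (tup E p x) mod p = (if x \<in> smul (int p) ` E then 1 else 0)" for x
  proof -
    have "card (tup E p x) mod p = card {xs\<in>tup E p x. rotate1 xs = xs} mod p"
      by (rule card_mod_fix[OF p tup_finite[OF finE]]) (auto simp: tup_def sum_list_rotate1)
    also have "card {xs\<in>tup E p x. rotate1 xs = xs} = card {e\<in>E. smul (int p) e = x}"
      unfolding tup_fix[OF p0] by (rule card_image) (auto simp: inj_on_def replicate_eq_replicate p0)
    also have "card {e\<in>E. smul (int p) e = x} = (if x \<in> smul (int p) ` E then 1 else 0)"
    proof (cases "x \<in> smul (int p) ` E")
      case True
      then obtain e where e: "e \<in> E" "x = smul (int p) e" by blast
      have "\<forall>e'. smul (int p) e' = smul (int p) e \<longrightarrow> e' = e" using smul_inj[of "int p"] p0 by simp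
      hence "{e\<in>E. smul (int p) e = x} = {e}" using e by blast
      thus ?thesis using True by simp
    next
      case False
      hence "{e\<in>E. smul (int p) e = x} = {}" by blast
      thus ?thesis using False by (simp only: card.empty if_False)
    qed
    finally show ?thesis using p2 by simp
  qed
  have "card (tup E p g) = card (tup E p g')" using tup_bc[OF E, of p] s unfolding bc_def by blast
  hence "card (tup E p g') mod p = 1" using cm[of g] g by simp
  hence "(if g' \<in> smul (int p) ` E then 1 else 0) = (1::nat)" using cm[of g'] by simp
  thus ?thesis by (cases "g' \<in> smul (int p) ` E") simp_all
qed

lemma Aset_smul:
  assumes X: "Aset X" and p: "prime p"
  shows "Aset (smul (int p) ` X)"
  unfolding Aset_def
proof (intro allI impI)
  fix g g' assume s: "sb g g'" and "g \<in> smul (int p) ` X"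
  then obtain x where x: "x \<in> X" "g = smul (int p) x" by blast
  have "g \<in> smul (int p) ` blk x" using x blk by blast
  hence "g' \<in> smul (int p) ` blk x" using multiplier[OF p blk(1) s] by blast
  thus "g' \<in> smul (int p) ` X" using Aset_blk[OF X x(1)] by blast
qed

lemma Aset_UNIV: "Aset UNIV" by (simp add: Aset_def)

lemma Aset_range: "n > 0 \<Longrightarrow> Aset (range (smul (int n)))"
proof (induction n rule: less_induct)
  case (less n)
  show ?case
  proof (cases "n = 1")
    case True
    thus ?thesis using Aset_UNIV by (simp add: smul_one)
  next
    case False
    then obtain p where p: "prime p" "p dvd n" using prime_factor_nat by blast
    then obtain m where m: "n = p * m" by blast
    have "m > 0" using m less(2) by (cases m) auto
    have "m < n" using m n_less_m_mult_n[OF \<open>m > 0\<close>, of p] prime_gt_1_nat[OF p(1)] by simp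
    have "range (smul (int n)) = smul (int p) ` range (smul (int m))"
      unfolding m by (auto simp: smul_mult image_image)
    thus ?thesis using Aset_smul[OF less(1)[OF \<open>m < n\<close> \<open>m > 0\<close>] p(1)] by simp
  qed
qed

lemma sbD: "sb g g' \<Longrightarrow> g' \<in> blk g" by (simp add: sb_def)

lemma sb_in: "E \<in> \<D> \<Longrightarrow> g \<in> E \<Longrightarrow> g' \<in> E \<Longrightarrow> sb g g'"
  using sb_iff by blast

lemma Aset_sb: "Aset X \<Longrightarrow> sb g g' \<Longrightarrow> g \<in> X \<Longrightarrow> g' \<in> X"
  unfolding Aset_def by blast

lemma range_smul_dvd: "g \<in> range (smul n) \<Longrightarrow> n dvd snd g \<and> n dvd fst g"
  by (auto simp: smul_def)

lemma nonlin: "(y::int) \<noteq> 0 \<Longrightarrow> (k::int) \<noteq> 0 \<Longrightarrow> \<bar>y\<bar> < k * k * y * y + 1"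
proof -
  assume y: "y \<noteq> 0" and k: "k \<noteq> 0"
  have "0 < k * k" using k by (auto simp: zero_less_mult_iff linorder_neq_iff)
  hence "1 \<le> k * k" by simp
  have "1 \<le> \<bar>y\<bar>" using y by simp
  have a: "\<bar>y\<bar> \<le> \<bar>y\<bar> * \<bar>y\<bar>" using mult_right_mono[OF \<open>1 \<le> \<bar>y\<bar>\<close>, of "\<bar>y\<bar>"] by simp
  have "\<bar>y\<bar> * \<bar>y\<bar> = y * y" by (simp add: abs_mult_self_eq)
  moreover have "y * y \<le> k * k * (y * y)" using \<open>1 \<le> k * k\<close>
    by (simp add: mult_le_cancel_right1)
  ultimately show ?thesis using a by (simp add: mult.assoc)
qed

lemma L_Aset:
  assumes k: "k \<noteq> 0" and H: "Aset {(k * n, 0) | n. True}"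
  shows "Aset {g. snd g = 0}"
  unfolding Aset_def
proof (intro allI impI, rule ccontr)
  fix g g' assume s: "sb g g'" and g0: "g \<in> {g. snd g = 0}" and ng: "g' \<notin> {g. snd g = 0}"
  define y where "y = snd g'"
  have y0: "y \<noteq> 0" using ng y_def by simp
  define nn where "nn = k * k * y * y + 1"
  have lt: "\<bar>y\<bar> < nn" using nonlin[OF y0 k] nn_def by simp
  hence nnpos: "nn > 0" by simp
  define N where "N = nat nn"
  have NN: "int N = nn" using nnpos N_def by simp
  let ?X = "{a + b | a b. a \<in> range (smul (int N)) \<and> b \<in> {(k * n, 0) | n. True}}"
  have X: "Aset ?X" by (rule Aset_sum[OF Aset_range H]) (use NN nnpos in simp)
  obtain x where gx: "g = (x, 0)" using g0 by (cases g) auto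
  have "g = smul nn (x, 0) + (k * (- (k * y * y * x)), 0)"
    unfolding gx smul_def nn_def by (simp add: algebra_simps)
  hence "g \<in> ?X" unfolding NN by blast
  hence "g' \<in> ?X" using Aset_sb[OF X s] by blast
  then obtain a b where ab: "g' = a + b" "a \<in> range (smul nn)" "b \<in> {(k * n, 0) | n. True}"
    unfolding NN by blast
  have "snd g' = snd a" using ab(1,3) by auto
  hence "nn dvd y" using range_smul_dvd[OF ab(2)] y_def by simp
  hence "\<bar>nn\<bar> \<le> \<bar>y\<bar>" using y0 dvd_imp_le_int by blast
  thus False using lt by simp
qed

lemma Lblk:
  assumes k: "k \<noteq> 0" and H: "Aset {(k * n, 0) | n. True}" and s: "sb (t, 0) g'"
  shows "g' = (t, 0) \<or> g' = (-t, 0)"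
proof -
  have "snd g' = 0" using Aset_sb[OF L_Aset[OF k H] s] by simp
  then obtain u where u: "g' = (u, 0)" by (cases g') auto
  have dv: "a dvd b" if ab: "sb (a, 0) (b, 0)" "a \<noteq> 0" for a b
  proof -
    have "(a, 0) = smul (int (nat \<bar>a\<bar>)) (sgn a, 0)" by (simp add: smul_def abs_mult_sgn)
    hence "(a, 0) \<in> range (smul (int (nat \<bar>a\<bar>)))" by blast
    moreover have "nat \<bar>a\<bar> > 0" using ab(2) by simp
    ultimately have "(b, 0) \<in> range (smul (int (nat \<bar>a\<bar>)))"
      using Aset_sb[OF Aset_range ab(1)] by blast
    hence "\<bar>a\<bar> dvd b" using range_smul_dvd by fastforce
    thus ?thesis by simp
  qed
  show ?thesis
  proof (cases "t = 0")
    case True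
    hence "g' = 0" using s sb_zero by (simp add: zero_prod_def)
    thus ?thesis using True u by (simp add: zero_prod_def)
  next
    case False
    have s': "sb (u, 0) (t, 0)" using s u sb_sym by simp
    have "u \<noteq> 0"
    proof
      assume "u = 0"
      hence "sb 0 (t, 0)" using s' by (simp add: zero_prod_def)
      hence "(t, 0) = (0::grp)" using sb_zero by blast
      thus False using False by (simp add: zero_prod_def)
    qed
    have "t dvd u" using dv[OF _ False] s u by simp
    moreover have "u dvd t" using dv[OF s' \<open>u \<noteq> 0\<close>] .
    ultimately have "\<bar>t\<bar> = \<bar>u\<bar>" using zdvd_antisym_abs by blast
    hence "u = t \<or> u = -t" by arith
    thus ?thesis using u by auto
  qed
qed


lemma levels:
  assumes k: "k \<noteq> 0" and H: "Aset {(k * n, 0) | n. True}"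
    and D: "D \<in> \<D>" and b: "(0, 1) \<in> D" and d: "d \<in> D"
  shows "snd d = 1 \<or> snd d = -1"
proof (rule ccontr)
  assume nd: "\<not> (snd d = 1 \<or> snd d = -1)"
  have s: "sb d (0, 1)" using sb_in[OF D d b] .
  define y where "y = snd d"
  show False
  proof (cases "y = 0")
    case True
    have "(0::int, 1::int) \<in> {g. snd g = 0}"
      using Aset_sb[OF L_Aset[OF k H] s] True y_def by simp
    thus False by simp
  next
    case False
    define N where "N = nat \<bar>y\<bar>"
    have NN: "int N = \<bar>y\<bar>" using N_def by simp
    have Npos: "N > 0" using False N_def by simp
    let ?X = "{a + c | a c. a \<in> range (smul (int N)) \<and> c \<in> {g. snd g = 0}}"
    have X: "Aset ?X" by (rule Aset_sum[OF Aset_range[OF Npos] L_Aset[OF k H]])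
    have "d = smul \<bar>y\<bar> (0, sgn y) + (fst d, 0)"
      by (cases d) (simp add: smul_def y_def abs_mult_sgn)
    moreover have "smul \<bar>y\<bar> (0, sgn y) \<in> range (smul \<bar>y\<bar>)" by blast
    moreover have "(fst d, 0) \<in> {g. snd g = (0::int)}" by simp
    ultimately have "d \<in> ?X" unfolding NN by blast
    hence "(0, 1) \<in> ?X" using Aset_sb[OF X s] by blast
    then obtain a c where ac: "(0::int, 1::int) = a + c" "a \<in> range (smul \<bar>y\<bar>)" "snd c = 0"
      unfolding NN by blast
    have "snd a = 1" using ac(1,3) by (metis add.right_neutral snd_add snd_conv)
    hence "\<bar>y\<bar> dvd 1" using range_smul_dvd[OF ac(2)] by simp
    hence "\<bar>y\<bar> = 1" by simp
    thus False using nd y_def by arith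
  qed
qed

lemma G1:
  assumes k: "k \<noteq> 0" and H: "Aset {(k * n, 0) | n. True}"
    and D: "D \<in> \<D>" and x: "(x, \<sigma>) \<in> D" and x': "(x', \<sigma>) \<in> D" and z: "(z, \<tau>) \<in> D"
  shows "\<exists>z'. (z', \<tau>) \<in> D \<and> (z - z' = x - x' \<or> z - z' = -(x - x')) \<and> sb (x - x', 0) (z - z', 0)"
proof -
  let ?B = "blk (x - x', 0)"
  have finD: "finite D" using fin D by blast
  have "(x', \<sigma>) \<in> {h\<in>D. (x, \<sigma>) - h \<in> ?B}" using x' blk(2) by simp
  hence "cnt D ?B (x, \<sigma>) > 0" unfolding cnt_def using finD card_gt_0_iff by fastforce
  moreover have "cnt D ?B (x, \<sigma>) = cnt D ?B (z, \<tau>)"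
    using cnt_sb[OF D blk(1) sb_in[OF D x z]] .
  ultimately have "{h\<in>D. (z, \<tau>) - h \<in> ?B} \<noteq> {}" unfolding cnt_def by (intro notI) simp
  then obtain e where e: "e \<in> D" "(z, \<tau>) - e \<in> ?B" by blast
  have "sb (x - x', 0) ((z, \<tau>) - e)" using e(2) by (simp add: sb_def)
  hence "(z, \<tau>) - e = (x - x', 0) \<or> (z, \<tau>) - e = (-(x - x'), 0)" using Lblk[OF k H] by blast
  moreover obtain z' w where ew: "e = (z', w)" by (cases e)
  ultimately have "w = \<tau>" "z - z' = x - x' \<or> z - z' = -(x - x')" by auto
  moreover have "sb (x - x', 0) (z - z', 0)" using \<open>sb (x - x', 0) ((z, \<tau>) - e)\<close> ew \<open>w = \<tau>\<close> by simp
  ultimately show ?thesis using e(1) ew by blast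
qed

lemma atmost2:
  assumes k: "k \<noteq> 0" and H: "Aset {(k * n, 0) | n. True}" and D: "D \<in> \<D>"
    and a: "(a, \<sigma>) \<in> D" and b: "(b, \<sigma>) \<in> D" and c: "(c, \<sigma>) \<in> D"
  shows "a = b \<or> a = c \<or> b = c"
proof (rule ccontr)
  assume dist: "\<not> (a = b \<or> a = c \<or> b = c)"
  define Q where "Q = {x. (x, \<sigma>) \<in> D}"
  have finD: "finite D" using fin D by blast
  have "Q \<subseteq> fst ` D" unfolding Q_def by force
  hence finQ: "finite Q" using finD finite_subset by blast
  have abc: "a \<in> Q" "b \<in> Q" "c \<in> Q" using a b c Q_def by auto
  define lo where "lo = Min Q"
  define hi where "hi = Max Q"
  have bounds: "\<And>x. x \<in> Q \<Longrightarrow> lo \<le> x \<and> x \<le> hi" using finQ lo_def hi_def by auto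
  have loQ: "lo \<in> Q" and hiQ: "hi \<in> Q" using finQ abc lo_def hi_def Min_in Max_in by blast+
  obtain m where m: "m \<in> Q" "m \<noteq> lo" "m \<noteq> hi" using abc dist by metis
  have mlh: "lo < m" "m < hi" using bounds[OF m(1)] m by auto
  obtain z' where z': "(z', \<sigma>) \<in> D" "m - z' = hi - lo \<or> m - z' = -(hi - lo)"
    using G1[OF k H D _ _ , of hi \<sigma> lo m \<sigma>] hiQ loQ m(1) Q_def by blast
  have "lo \<le> z' \<and> z' \<le> hi" using bounds z'(1) Q_def by blast
  thus False using z'(2) mlh by linarith
qed




lemma main:
  assumes k: "k \<noteq> 0" and H: "Aset {(k * n, 0) | n. True}"
    and D: "D \<in> \<D>" and b: "(0, 1) \<in> D"
  shows "D = {(0, 1)} \<or>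
         D = {(0, 1), (0, -1)} \<or>
         (\<exists>i0. i0 \<noteq> 0 \<and> D = {(i0, 1), (0, 1)}) \<or>
         (\<exists>i1. i1 \<noteq> 0 \<and> D = {(i1, -1), (0, 1)}) \<or>
         (\<exists>i2. i2 \<noteq> 0 \<and> D = {(0, 1), (i2, 1), (0, -1), (-i2, -1)})"
proof -
  have lev: "\<And>x y. (x, y) \<in> D \<Longrightarrow> y = 1 \<or> y = -1"
    using levels[OF k H D b] by fastforce
  have ext: "D = S" if S1: "\<And>x. (x, 1) \<in> D \<longleftrightarrow> (x, 1) \<in> S"
    and S2: "\<And>x. (x, -1) \<in> D \<longleftrightarrow> (x, -1) \<in> S"
    and S3: "\<And>x y. (x, y) \<in> S \<Longrightarrow> y = 1 \<or> y = -1" for S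
  proof (rule set_eqI)
    fix g :: grp
    obtain x y where g: "g = (x, y)" by (cases g)
    show "g \<in> D \<longleftrightarrow> g \<in> S"
    proof (cases "y = 1 \<or> y = -1")
      case True thus ?thesis using S1 S2 g by auto
    next
      case False thus ?thesis using lev S3 g by blast
    qed
  qed
  note G = G1[OF k H D]
  show ?thesis
  proof (cases "\<exists>i. (i, 1) \<in> D \<and> i \<noteq> 0")
    case False
    hence P0: "\<And>x. (x, 1) \<in> D \<longleftrightarrow> x = 0" using b by blast
    show ?thesis
    proof (cases "\<exists>j. (j, -1) \<in> D")
      case True
      then obtain j where j: "(j, -1) \<in> D" by blast
      have Nj: "(j', -1) \<in> D \<longleftrightarrow> j' = j" for j'
      proof
        assume j': "(j', -1) \<in> D"
        obtain z' where "(z', 1) \<in> D" "0 - z' = j - j' \<or> 0 - z' = -(j - j')"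
          using G[OF j j' b] by blast
        thus "j' = j" using P0 by auto
      qed (use j in simp)
      show ?thesis
      proof (cases "j = 0")
        case True
        have "D = {(0, 1), (0, -1)}" by (rule ext) (use P0 Nj True in auto)
        thus ?thesis by blast
      next
        case False
        have "D = {(j, -1), (0, 1)}" by (rule ext) (use P0 Nj in auto)
        thus ?thesis using False by blast
      qed
    next
      case False
      have "D = {(0, 1)}" by (rule ext) (use P0 False in auto)
      thus ?thesis by blast
    qed
  next
    case True
    then obtain i where i: "(i, 1) \<in> D" "i \<noteq> 0" by blast
    have Pi: "(x, 1) \<in> D \<longleftrightarrow> x = 0 \<or> x = i" for x
      using atmost2[OF k H D _ b i(1), of x] i b by auto
    show ?thesis
    proof (cases "\<exists>j. (j, -1) \<in> D")
      case False
      have "D = {(i, 1), (0, 1)}" by (rule ext) (use Pi False in auto)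
      thus ?thesis using i by blast
    next
      case True
      then obtain j where j: "(j, -1) \<in> D" by blast
      obtain z' where z': "(z', -1) \<in> D" "j - z' = i - 0 \<or> j - z' = -(i - 0)"
        using G[OF i(1) b j] by blast
      obtain u where u: "(u, -1) \<in> D" "(u + i, -1) \<in> D"
      proof (cases "j - z' = i")
        case True
        hence "z' + i = j" by simp
        thus ?thesis using that[of z'] z'(1) j by simp
      next
        case False
        hence "z' = j + i" using z'(2) by simp
        thus ?thesis using that[of j] z' j by simp
      qed
      have Nu: "(x, -1) \<in> D \<longleftrightarrow> x = u \<or> x = u + i" for x
        using atmost2[OF k H D _ u(1) u(2), of x] i u by auto
      have ui: "u = -i"
      proof (rule ccontr)
        assume nu: "u \<noteq> -i"
        define m where "m = u + i"
        have m0: "m \<noteq> 0" using nu m_def by simp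
        have Dset: "D = {(0, 1), (i, 1), (u, -1), (u + i, -1)}"
          by (rule ext) (use Pi Nu in auto)
        have finD: "finite D" using fin D by blast
        have all: "{h\<in>D. (m, 0) - h \<in> D} = D"
          unfolding Dset m_def by auto
        have nsb: "\<not> sb (m, 0) (-m, 0)"
        proof
          assume s: "sb (m, 0) (-m, 0)"
          have "cnt D D (m, 0) = cnt D D (-m, 0)" using cnt_sb[OF D D s] .
          hence "card {h\<in>D. (-m, 0) - h \<in> D} = card D" unfolding cnt_def all by simp
          hence eq: "{h\<in>D. (-m, 0) - h \<in> D} = D"
            by (intro card_subset_eq[OF finD]) auto
          have "(0, 1) \<in> {h\<in>D. (-m, 0) - h \<in> D}" using eq b by simp
          hence "(-m, -1) \<in> D" by simp
          hence a1: "-m = u \<or> -m = u + i" using Nu by simp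
          have "(i, 1) \<in> {h\<in>D. (-m, 0) - h \<in> D}" using eq i by simp
          hence "(-m - i, -1) \<in> D" by simp
          hence a2: "-m - i = u \<or> -m - i = u + i" using Nu by simp
          show False using a1 a2 m_def m0 i(2) by linarith
        qed
        have single: "blk (m, 0) = {(m, 0)}"
        proof
          show "blk (m, 0) \<subseteq> {(m, 0)}"
          proof
            fix g assume "g \<in> blk (m, 0)"
            hence "sb (m, 0) g" by (simp add: sb_def)
            hence "g = (m, 0) \<or> g = (-m, 0)" using Lblk[OF k H] by blast
            thus "g \<in> {(m, 0)}" using nsb \<open>sb (m, 0) g\<close> by auto
          qed
        qed (simp add: blk)
        hence sD: "{(m, 0)} \<in> \<D>" using blk(1)[of "(m, 0)"] by simp
        obtain z'' where z'': "(z'', 1) \<in> D" "sb (i - 0, 0) (0 - z'', 0)"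
          using G[OF i(1) b b] by blast
        have sbi: "sb (i, 0) (-i, 0)"
        proof (cases "z'' = 0")
          case True
          hence "sb 0 (i, 0)" using z''(2) sb_sym by (simp add: zero_prod_def)
          hence "(i, 0) = (0::grp)" using sb_zero by blast
          thus ?thesis using i(2) by (simp add: zero_prod_def)
        next
          case False
          hence "z'' = i" using Pi z''(1) by blast
          thus ?thesis using z''(2) by simp
        qed
        have "sb ((i, 0) + (m, 0)) ((-i, 0) + (m, 0))" using translate[OF sD sbi] .
        hence "sb (i + m, 0) (-i + m, 0)" by simp
        hence "(-i + m, 0) = (i + m, 0) \<or> (-i + m, 0) = (-(i + m), 0)" using Lblk[OF k H] by blast
        thus False using i(2) m0 by auto
      qed
      have "D = {(0, 1), (i, 1), (0, -1), (-i, -1)}"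
        by (rule ext) (use Pi Nu ui in auto)
      thus ?thesis using i(2) by blast
    qed
  qed
qed

end

lemma Aset_of_subgroup:
  assumes "SR \<D>" "A_subgroup \<D> H"
  shows "SR.Aset \<D> H"
proof -
  interpret SR \<D> by fact
  show ?thesis unfolding Aset_def
  proof (intro allI impI)
    fix g g' assume s: "sb g g'" and g: "g \<in> H"
    have "H = \<Union>{E\<in>\<D>. E \<subseteq> H}" using assms(2) by (simp add: A_subgroup_def)
    then obtain E where E: "E \<in> \<D>" "E \<subseteq> H" "g \<in> E" using g by blast
    have "g' \<in> blk g" using s by (simp add: sb_def)
    thus "g' \<in> H" using blk_eq[OF E(1,3)] E(2) by blast
  qed
qed

theorem theorem3p3:
  fixes \<D> :: "(int \<times> int) set set" and k :: int and D :: "(int \<times> int) set"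
  assumes "schur_partition TYPE('f::field_char_0) \<D>"
    and "k \<noteq> 0"
    and "A_subgroup \<D> {(k * n, 0) | n. True}"
    and "D \<in> \<D>" and "(0, 1) \<in> D"
  shows "D = {(0, 1)} \<or>
         D = {(0, 1), (0, -1)} \<or>
         (\<exists>i0. i0 \<noteq> 0 \<and> D = {(i0, 1), (0, 1)}) \<or>
         (\<exists>i1. i1 \<noteq> 0 \<and> D = {(i1, -1), (0, 1)}) \<or>
         (\<exists>i2. i2 \<noteq> 0 \<and> D = {(0, 1), (i2, 1), (0, -1), (-i2, -1)})"
proof -
  have sr: "SR \<D>" using schur_SR[OF assms(1)] .
  show ?thesis
    using SR.main[OF sr assms(2) Aset_of_subgroup[OF sr assms(3)] assms(4,5)] .
qed

end
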